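(* Let $H=(V,E)$ be a hypergraph whose vertex set $V$ is a partition of $[n]$ into sets of cardinality at least $2$, and suppose $H$ is downward-closed (for every $e\in E$ and every $e'\subseteq e$ with $|e'|>1$, $e'\in E$). Let $D=\{\bar i_I\}_{I\in V}$ with $\bar i_I\in I$ for each $I\in V$. Let $a\cdot w\le\delta$ ($a\in\mathbb{R}^{\mathcal{J}^H}$, $\delta\in\mathbb{R}$) be a valid inequality for $\mathrm{MC}^H$ such that $\{J\in\mathcal{J}^H: a_J\ne 0\}\subseteq\mathcal{J}^H_\le(D)$. Then $a\cdot w\le\delta$ is facet-inducing for $\mathrm{MC}^H$ if and only if $\operatorname{proj}_{\mathcal{J}^H_\le(D)}a\cdot v\le\delta$ is facet-inducing for $\mathrm{MC}^H_\le(D)$.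
   Context: Let $n$ be a positive integer, $[n]=\{1,\dots,n\}$. A hypergraph $H=(V,E)$ here has as vertex set $V$ a family of pairwise disjoint subsets of $[n]$, each of cardinality at least $2$, and hyperedge set $E$ consisting of subsets $e\subseteq V$ with $|e|\ge 2$. Write $L(V)=\{\{I\}: I\in V\}$. For a nonempty $e\subseteq V$, $\mathcal{J}^e$ denotes the family of sets $J\subseteq \bigcup_{I\in e} I$ with $|J\cap I|=1$ for every $I\in e$. Let $\mathcal{J}^H=\bigcup_{e\in L(V)\cup E}\mathcal{J}^e$. For a vector $w$ indexed by sets, write $w_i=w_{\{i\}}$ and $w(A)=\sum_{i\in A}w_i$. Let $\mathscr{S}^H=\{w\in\{0,1\}^{\mathcal{J}^H}: w(I)=1\ \forall I\in V;\ w_J=\prod_{i\in J}w_i\ \forall J\in\mathcal{J}^H, |J|>1\}$ and $\mathrm{MC}^H=\operatorname{conv}\mathscr{S}^H$. For $D$ as in the claim, $\mathcal{J}^H_\le(D)=\{J\in\mathcal{J}^H: J\subseteq[n]\setminus D\}$ and $\mathrm{MC}^H_\le(D)=\operatorname{conv}\{v\in\{0,1\}^{\mathcal{J}^H_\le(D)}: v(I\setminus D)\le 1\ \forall I\in V;\ v_J=\prod_{i\in J}v_i\ \forall J\in\mathcal{J}^H_\le(D), |J|>1\}$. $\operatorname{proj}_{S'}$ extracts coordinates indexed by $S'$. *)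

theory Defs
  imports "HOL-Analysis.Analysis"
begin

text \<open>The ground set [n] is modelled by a finite type 'a (with CARD('a) = n).
  Vectors indexed by a family of subsets of [n] are modelled as elements of
  real ^ ('a set) whose coordinates outside that family are zero.\<close>

definition hyp_ok :: "'a set set \<Rightarrow> 'a set set set \<Rightarrow> bool" where
  "hyp_ok V E \<longleftrightarrow>
     (\<forall>I\<in>V. \<forall>I'\<in>V. I \<noteq> I' \<longrightarrow> I \<inter> I' = {}) \<and>
     (\<forall>I\<in>V. finite I \<and> card I \<ge> 2) \<and>
     (\<forall>e\<in>E. e \<subseteq> V \<and> finite e \<and> card e \<ge> 2)"

definition partition_of_UNIV :: "'a set set \<Rightarrow> bool" where
  "partition_of_UNIV V \<longleftrightarrow> \<Union>V = UNIV"

definition downward_closed :: "'a set set set \<Rightarrow> bool" where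
  "downward_closed E \<longleftrightarrow> (\<forall>e\<in>E. \<forall>e'. e' \<subseteq> e \<and> card e' > 1 \<longrightarrow> e' \<in> E)"

definition Lsing :: "'a set set \<Rightarrow> 'a set set set" where
  "Lsing V = {{I} | I. I \<in> V}"

definition Jfam :: "'a set set \<Rightarrow> 'a set set" where
  "Jfam e = {J. J \<subseteq> \<Union>e \<and> (\<forall>I\<in>e. card (J \<inter> I) = 1)}"

definition JH :: "'a set set \<Rightarrow> 'a set set set \<Rightarrow> 'a set set" where
  "JH V E = (\<Union>e \<in> Lsing V \<union> E. Jfam e)"

definition SH :: "'a::finite set set \<Rightarrow> 'a set set set \<Rightarrow> (real ^ ('a set)) set" where
  "SH V E = {w. (\<forall>J \<in> JH V E. w $ J \<in> {0,1}) \<and> (\<forall>J. J \<notin> JH V E \<longrightarrow> w $ J = 0) \<and>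
               (\<forall>I\<in>V. (\<Sum>i\<in>I. w $ {i}) = 1) \<and>
               (\<forall>J \<in> JH V E. card J > 1 \<longrightarrow> w $ J = (\<Prod>i\<in>J. w $ {i}))}"

definition MCH :: "'a::finite set set \<Rightarrow> 'a set set set \<Rightarrow> (real ^ ('a set)) set" where
  "MCH V E = convex hull (SH V E)"

definition JHle :: "'a set set \<Rightarrow> 'a set set set \<Rightarrow> 'a set \<Rightarrow> 'a set set" where
  "JHle V E D = {J \<in> JH V E. J \<subseteq> - D}"

definition SHle :: "'a::finite set set \<Rightarrow> 'a set set set \<Rightarrow> 'a set \<Rightarrow> (real ^ ('a set)) set" where
  "SHle V E D = {v. (\<forall>J \<in> JHle V E D. v $ J \<in> {0,1}) \<and> (\<forall>J. J \<notin> JHle V E D \<longrightarrow> v $ J = 0) \<and>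
               (\<forall>I\<in>V. (\<Sum>i\<in>I - D. v $ {i}) \<le> 1) \<and>
               (\<forall>J \<in> JHle V E D. card J > 1 \<longrightarrow> v $ J = (\<Prod>i\<in>J. v $ {i}))}"

definition MCHle :: "'a::finite set set \<Rightarrow> 'a set set set \<Rightarrow> 'a set \<Rightarrow> (real ^ ('a set)) set" where
  "MCHle V E D = convex hull (SHle V E D)"

definition proj :: "'a::finite set set \<Rightarrow> real ^ ('a set) \<Rightarrow> real ^ ('a set)" where
  "proj S' a = (\<chi> J. if J \<in> S' then a $ J else 0)"

definition valid_ineq :: "('n::euclidean_space) set \<Rightarrow> 'n \<Rightarrow> real \<Rightarrow> bool" where
  "valid_ineq P a \<delta> \<longleftrightarrow> (\<forall>x\<in>P. a \<bullet> x \<le> \<delta>)"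

definition facet_inducing :: "('n::euclidean_space) set \<Rightarrow> 'n \<Rightarrow> real \<Rightarrow> bool" where
  "facet_inducing P a \<delta> \<longleftrightarrow> valid_ineq P a \<delta> \<and> {x\<in>P. a \<bullet> x = \<delta>} facet_of P"

end

theory Submission
  imports Defs
begin



definition affm :: "('a::real_vector \<Rightarrow> 'b::real_vector) \<Rightarrow> bool" where
  "affm f \<longleftrightarrow> (\<forall>a b u. f ((1-u) *\<^sub>R a + u *\<^sub>R b) = (1-u) *\<^sub>R f a + u *\<^sub>R f b)"

lemma face_transfer:
  assumes f: "affm f" and g: "affm g" and inv: "\<forall>x\<in>S. g (f x) = x" and F: "F face_of S"
  shows "f ` F face_of f ` S"
proof -
  have FS: "F \<subseteq> S" and cF: "convex F" and ext: "\<forall>a \<in> S. \<forall>b \<in> S. \<forall>x \<in> F. x \<in> open_segment a b \<longrightarrow> a \<in> F \<and> b \<in> F"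
    using F unfolding face_of_def by auto
  have "convex (f ` F)"
    unfolding convex_def
  proof (intro ballI allI impI)
    fix x y u v assume xy: "x \<in> f ` F" "y \<in> f ` F" and uv: "0 \<le> u" "0 \<le> v" "u + v = (1::real)"
    obtain x0 y0 where x0: "x0 \<in> F" "x = f x0" and y0: "y0 \<in> F" "y = f y0" using xy by auto
    have "u *\<^sub>R x0 + v *\<^sub>R y0 \<in> F" using cF x0 y0 uv unfolding convex_def by blast
    moreover have "f (u *\<^sub>R x0 + v *\<^sub>R y0) = u *\<^sub>R x + v *\<^sub>R y"
      proof -
      have "f ((1-u) *\<^sub>R y0 + u *\<^sub>R x0) = (1-u) *\<^sub>R f y0 + u *\<^sub>R f x0" using f unfolding affm_def by blast
      moreover have "v = 1 - u" using uv by simp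
      ultimately show ?thesis using x0 y0 by (simp add: add.commute)
    qed
    ultimately show "u *\<^sub>R x + v *\<^sub>R y \<in> f ` F" by (metis image_eqI)
  qed
  moreover have "\<forall>a \<in> f ` S. \<forall>b \<in> f ` S. \<forall>x \<in> f ` F. x \<in> open_segment a b \<longrightarrow> a \<in> f ` F \<and> b \<in> f ` F"
  proof (intro ballI impI)
    fix a b x assume a: "a \<in> f ` S" and b: "b \<in> f ` S" and x: "x \<in> f ` F" and seg: "x \<in> open_segment a b"
    obtain a0 b0 x0 where a0: "a0 \<in> S" "a = f a0" and b0: "b0 \<in> S" "b = f b0" and x0: "x0 \<in> F" "x = f x0"
      using a b x by auto
    obtain u where u: "0 \<le> u" "u \<le> 1" "x = (1-u) *\<^sub>R a + u *\<^sub>R b" and xa: "x \<noteq> a" and xb: "x \<noteq> b"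
      using seg unfolding open_segment_def closed_segment_def by auto
    have "x0 = g x" using inv x0 FS by auto
    also have "\<dots> = (1-u) *\<^sub>R a0 + u *\<^sub>R b0" using g[unfolded affm_def] u a0 b0 inv by simp
    finally have x0e: "x0 = (1-u) *\<^sub>R a0 + u *\<^sub>R b0" .
    have "x0 \<noteq> a0" "x0 \<noteq> b0" using xa xb x0 a0 b0 by auto
    then have "x0 \<in> open_segment a0 b0" using x0e u unfolding open_segment_def closed_segment_def by auto
    then have "a0 \<in> F \<and> b0 \<in> F" using ext a0 b0 x0 by blast
    then show "a \<in> f ` F \<and> b \<in> f ` F" using a0 b0 by auto
  qed
  ultimately show ?thesis using FS unfolding face_of_def by blast
qed

lemma affm_aff_dim:
  fixes G :: "'a::euclidean_space \<Rightarrow> 'b::euclidean_space"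
  assumes "linear G"
  shows "aff_dim ((\<lambda>x. G x + k) ` X) \<le> aff_dim X"
proof -
  have "(\<lambda>x. G x + k) ` X = (+) k ` (G ` X)" by (auto simp: image_image add.commute)
  then show ?thesis using aff_dim_translation_eq[of k "G ` X"] aff_dim_linear_image_le[OF assms, of X] by simp
qed

lemma affm_lin: assumes "linear G" shows "affm (\<lambda>x. G x + k)"
  unfolding affm_def
proof (intro allI)
  fix a b u
  have "G ((1-u) *\<^sub>R a + u *\<^sub>R b) = (1-u) *\<^sub>R G a + u *\<^sub>R G b"
    using assms by (simp only: linear_add linear_scale)
  then show "G ((1 - u) *\<^sub>R a + u *\<^sub>R b) + k = (1 - u) *\<^sub>R (G a + k) + u *\<^sub>R (G b + k)"
    by (simp add: scaleR_add_right algebra_simps)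
qed

lemma facet_transfer:
  fixes f :: "'a::euclidean_space \<Rightarrow> 'a" and G :: "'a \<Rightarrow> 'a"
  assumes FS: "F \<subseteq> S" and lf: "linear f" and lG: "linear G" and inv: "\<forall>x\<in>S. G (f x) + k = x"
  shows "F facet_of S \<longleftrightarrow> f ` F facet_of f ` S"
proof -
  define g where "g = (\<lambda>x. G x + k)"
  have af: "affm f" using affm_lin[OF lf, of 0] by simp
  have ag: "affm g" unfolding g_def by (rule affm_lin[OF lG])
  have inv': "\<forall>x\<in>S. g (f x) = x" using inv g_def by simp
  have inv2: "\<forall>y\<in>f ` S. f (g y) = y" using inv' by auto
  have gfX: "g ` f ` X = X" if "X \<subseteq> S" for X using inv' that by (force simp: image_image)
  have ad: "aff_dim (f ` X) = aff_dim X" if "X \<subseteq> S" for X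
  proof -
    have "aff_dim (f ` X) \<le> aff_dim X" by (rule aff_dim_linear_image_le[OF lf])
    moreover have "aff_dim (g ` f ` X) \<le> aff_dim (f ` X)" unfolding g_def by (rule affm_aff_dim[OF lG])
    ultimately show ?thesis using gfX[OF that] by simp
  qed
  show ?thesis
  proof
    assume F: "F facet_of S"
    then have "F face_of S" "F \<noteq> {}" "F \<subseteq> S" by (auto simp: facet_of_def face_of_def)
    then show "f ` F facet_of f ` S"
      using F face_transfer[OF af ag inv'] ad[of F] ad[of S] by (auto simp: facet_of_def)
  next
    assume F: "f ` F facet_of f ` S"
    then have "f ` F face_of f ` S" "f ` F \<noteq> {}" by (auto simp: facet_of_def)
    then have "g ` f ` F face_of g ` f ` S" using face_transfer[OF ag af inv2] by blast
    moreover have "F \<subseteq> S" by (rule FS)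
    ultimately show "F facet_of S" using F ad[of F] ad[of S] gfX[of F] gfX[of S] by (auto simp: facet_of_def)
  qed
qed




locale hg =
  fixes V :: "'a::finite set set" and E :: "'a set set set" and ibar :: "'a set \<Rightarrow> 'a" and D :: "'a set"
  assumes hok: "hyp_ok V E" and part: "partition_of_UNIV V" and dc: "downward_closed E"
    and ib: "\<forall>I\<in>V. ibar I \<in> I" and Dd: "D = ibar ` V"
begin

lemma blk_uniq: "I \<in> V \<Longrightarrow> I' \<in> V \<Longrightarrow> x \<in> I \<Longrightarrow> x \<in> I' \<Longrightarrow> I = I'"
  using hok unfolding hyp_ok_def by blast

lemma blk_ex: "\<exists>I\<in>V. i \<in> I"
  using part unfolding partition_of_UNIV_def by blast

lemma ID: "I \<in> V \<Longrightarrow> I \<inter> D = {ibar I}"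
  using ib blk_uniq unfolding Dd by blast

lemma single_JH: "{i} \<in> JH V E"
proof -
  obtain I where I: "I \<in> V" "i \<in> I" using blk_ex by blast
  have "{I} \<in> Lsing V" using I unfolding Lsing_def by blast
  moreover have "{i} \<in> Jfam {I}" using I unfolding Jfam_def by auto
  ultimately show ?thesis unfolding JH_def by blast
qed

lemma single_JHle: "i \<notin> D \<Longrightarrow> {i} \<in> JHle V E D"
  using single_JH unfolding JHle_def by auto

lemma JH_e: assumes "J \<in> JH V E"
  obtains e where "e \<in> Lsing V \<union> E" "J \<in> Jfam e" "e \<subseteq> V" "e \<noteq> {}" "finite e"
proof -
  obtain e where e: "e \<in> Lsing V \<union> E" "J \<in> Jfam e" using assms unfolding JH_def by blast
  have "e \<subseteq> V \<and> e \<noteq> {} \<and> finite e"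
  proof (cases "e \<in> E")
    case True then show ?thesis using hok unfolding hyp_ok_def by fastforce
  next
    case False then show ?thesis using e unfolding Lsing_def by auto
  qed
  then show ?thesis using that e by blast
qed

lemma JH_ne: "J \<in> JH V E \<Longrightarrow> J \<noteq> {}"
proof -
  assume "J \<in> JH V E"
  then obtain e where "J \<in> Jfam e" "e \<noteq> {}" by (rule JH_e)
  then obtain I where "I \<in> e" "card (J \<inter> I) = 1" unfolding Jfam_def by blast
  then show ?thesis by auto
qed

lemma SH_prod: assumes w: "w \<in> SH V E" and J: "J \<in> JH V E"
  shows "w $ J = (\<Prod>i\<in>J. w $ {i})"
proof (cases "card J > 1")
  case True then show ?thesis using w J unfolding SH_def by blast
next
  case False
  have "J \<noteq> {}" using JH_ne J by blast
  then have "card J > 0" by (simp add: card_gt_0_iff)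
  then have "card J = 1" using False by linarith
  then obtain j where "J = {j}" using card_1_singletonE by blast
  then show ?thesis by simp
qed

lemma SH_ibar: assumes w: "w \<in> SH V E" and I: "I \<in> V"
  shows "w $ {ibar I} = 1 - (\<Sum>i\<in>I - D. w $ {i})"
proof -
  have fin: "finite I" by simp
  have II: "I = insert (ibar I) (I - D)" using ID[OF I] ib I by auto
  have nin: "ibar I \<notin> I - D" using ib I Dd by auto
  have "(\<Sum>i\<in>I. w $ {i}) = w $ {ibar I} + (\<Sum>i\<in>I - D. w $ {i})"
    by (subst II, subst sum.insert[OF _ nin]) auto
  moreover have "(\<Sum>i\<in>I. w $ {i}) = 1" using w I unfolding SH_def by blast
  ultimately show ?thesis by simp
qed

lemma JI: assumes J: "J \<in> Jfam e" and eV: "e \<subseteq> V" and d: "d \<in> J" and I: "I \<in> V" "d \<in> I"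
  shows "I \<in> e" "J \<inter> I = {d}"
proof -
  obtain I' where I': "I' \<in> e" "d \<in> I'" using J d unfolding Jfam_def by blast
  then show "I \<in> e" using blk_uniq I eV by blast
  then have "card (J \<inter> I) = 1" using J unfolding Jfam_def by blast
  then show "J \<inter> I = {d}" using d I by (metis IntI card_1_singletonE singletonD)
qed

lemma JH_swap: assumes J: "J \<in> JH V E" and d: "d \<in> J" and I: "I \<in> V" "d \<in> I" and i: "i \<in> I"
  shows "insert i (J - {d}) \<in> JH V E"
proof -
  obtain e where e: "e \<in> Lsing V \<union> E" "J \<in> Jfam e" "e \<subseteq> V" using J by (rule JH_e)
  have Ie: "I \<in> e" and JI1: "J \<inter> I = {d}" using JI[OF e(2) e(3) d I] by auto
  have "insert i (J - {d}) \<in> Jfam e"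
    unfolding Jfam_def
  proof (intro CollectI conjI ballI)
    show "insert i (J - {d}) \<subseteq> \<Union> e" using e(2) Ie i unfolding Jfam_def by auto
    fix I' assume I': "I' \<in> e"
    show "card (insert i (J - {d}) \<inter> I') = 1"
    proof (cases "I' = I")
      case True
      then have "insert i (J - {d}) \<inter> I' = {i}" using JI1 i by auto
      then show ?thesis by simp
    next
      case False
      then have "I \<inter> I' = {}" using blk_uniq I' e(3) I by blast
      then have "insert i (J - {d}) \<inter> I' = J \<inter> I'" using i I by auto
      then show ?thesis using e(2) I' unfolding Jfam_def by auto
    qed
  qed
  then show ?thesis using e(1) unfolding JH_def by blast
qed

lemma JH_del: assumes J: "J \<in> JH V E" and d: "d \<in> J" and I: "I \<in> V" "d \<in> I" and ne: "J \<noteq> {d}"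
  shows "J - {d} \<in> JH V E"
proof -
  obtain e where e: "e \<in> Lsing V \<union> E" "J \<in> Jfam e" "e \<subseteq> V" "finite e" using J by (rule JH_e)
  have Ie: "I \<in> e" and JI1: "J \<inter> I = {d}" using JI[OF e(2) e(3) d I] by auto
  obtain j where j: "j \<in> J" "j \<noteq> d" using ne d by blast
  obtain I2 where I2: "I2 \<in> e" "j \<in> I2" using e(2) j unfolding Jfam_def by blast
  have I2I: "I2 \<noteq> I" using JI1 j I2 by auto
  define e' where "e' = e - {I}"
  have Je': "J - {d} \<in> Jfam e'"
    unfolding Jfam_def
  proof (intro CollectI conjI ballI)
    show "J - {d} \<subseteq> \<Union> e'"
    proof
      fix x assume x: "x \<in> J - {d}"
      then obtain I3 where "I3 \<in> e" "x \<in> I3" using e(2) unfolding Jfam_def by blast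
      moreover have "I3 \<noteq> I" using x JI1 calculation by auto
      ultimately show "x \<in> \<Union> e'" unfolding e'_def by blast
    qed
    fix I' assume I': "I' \<in> e'"
    then have "I \<inter> I' = {}" using blk_uniq e(3) I unfolding e'_def by blast
    then have "(J - {d}) \<inter> I' = J \<inter> I'" using I by auto
    then show "card ((J - {d}) \<inter> I') = 1" using e(2) I' unfolding Jfam_def e'_def by auto
  qed
  show ?thesis
  proof (cases "card e' > 1")
    case True
    have "e \<in> E"
    proof (rule ccontr)
      assume "e \<notin> E"
      then obtain I0 where "e = {I0}" using e(1) unfolding Lsing_def by blast
      then have "card e' \<le> 1" unfolding e'_def by (simp add: card_Diff_singleton_if)
      then show False using True by linarith
    qed
    then have "e' \<in> E" using dc True unfolding downward_closed_def e'_def by blast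
    then show ?thesis using Je' unfolding JH_def by blast
  next
    case False
    have "I2 \<in> e'" using I2 I2I unfolding e'_def by blast
    moreover have "finite e'" using e(4) unfolding e'_def by simp
    ultimately have "card e' > 0" by (auto simp: card_gt_0_iff)
    then have "card e' = 1" using False by linarith
    then obtain x where "e' = {x}" by (rule card_1_singletonE)
    then have "e' = {I2}" using \<open>I2 \<in> e'\<close> by simp
    moreover have "{I2} \<in> Lsing V" using I2 e(3) unfolding Lsing_def by blast
    ultimately show ?thesis using Je' unfolding JH_def by blast
  qed
qed

end



lemma proj_comp: "proj S x $ J = (if J \<in> S then x $ J else 0)"
  unfolding proj_def by simp

lemma linear_proj: "linear (proj S)"
  by (rule linearI) (simp_all add: vec_eq_iff proj_comp)

lemma axis_inner: "axis J 1 \<bullet> (x::real^'b::finite) = x $ J"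
  by (metis cart_eq_inner_axis inner_commute)

context hg begin

abbreviation "P \<equiv> proj (JHle V E D)"

lemma key: "\<exists>c k. \<forall>w\<in>SH V E. w $ J = c \<bullet> P w + k"
proof (induction "card (J \<inter> D)" arbitrary: J rule: less_induct)
  case less
  show ?case
  proof (cases "J \<in> JH V E")
    case False
    then have "\<forall>w\<in>SH V E. w $ J = 0 \<bullet> P w + 0" unfolding SH_def by simp
    then show ?thesis by blast
  next
    case JJ: True
    show ?thesis
    proof (cases "J \<inter> D = {}")
      case True
      then have "J \<in> JHle V E D" using JJ unfolding JHle_def by auto
      then have "\<forall>w\<in>SH V E. w $ J = axis J 1 \<bullet> P w + 0"
        by (simp add: axis_inner proj_comp)
      then show ?thesis by blast
    next
      case False
      then obtain d where dJ: "d \<in> J" and dD: "d \<in> D" by blast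
      then obtain I where I: "I \<in> V" "d = ibar I" using Dd by blast
      have dI: "d \<in> I" using I ib by auto
      have IDd: "I \<inter> D = {d}" using ID[OF I(1)] I by simp
      have lessi: "card ((insert i (J - {d})) \<inter> D) < card (J \<inter> D)" if "i \<in> I - D" for i
      proof -
        have "(insert i (J - {d})) \<inter> D = J \<inter> D - {d}" using that by auto
        then show ?thesis using dJ dD by (metis IntI card_Diff1_less finite)
      qed
      have "\<forall>i\<in>I - D. \<exists>c k. \<forall>w\<in>SH V E. w $ (insert i (J - {d})) = c \<bullet> P w + k"
        using less lessi by blast
      then obtain C K where CK: "\<And>i w. i \<in> I - D \<Longrightarrow> w \<in> SH V E \<Longrightarrow> w $ (insert i (J - {d})) = C i \<bullet> P w + K i"
        by metis
      have JdI: "J \<inter> I = {d}"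
      proof -
        obtain e where e: "J \<in> Jfam e" "e \<subseteq> V" using JJ by (rule JH_e)
        show ?thesis using JI(2)[OF e dJ I(1) dI] .
      qed
      have wd: "w $ {d} = 1 - (\<Sum>i\<in>I - D. w $ {i})" if "w \<in> SH V E" for w
        using SH_ibar[OF that I(1)] I by simp
      show ?thesis
      proof (cases "J = {d}")
        case True
        have lessi1: "card ({i} \<inter> D) < card (J \<inter> D)" if "i \<in> I - D" for i
          using lessi[OF that] True by simp
        have "\<forall>i\<in>I - D. \<exists>c k. \<forall>w\<in>SH V E. w $ {i} = c \<bullet> P w + k"
          using less lessi1 by blast
        then obtain C1 K1 where CK1: "\<And>i w. i \<in> I - D \<Longrightarrow> w \<in> SH V E \<Longrightarrow> w $ {i} = C1 i \<bullet> P w + K1 i"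
          by metis
        have "\<forall>w\<in>SH V E. w $ J = (- (\<Sum>i\<in>I - D. C1 i)) \<bullet> P w + (1 - (\<Sum>i\<in>I - D. K1 i))"
        proof
          fix w assume w: "w \<in> SH V E"
          have "w $ J = 1 - (\<Sum>i\<in>I - D. C1 i \<bullet> P w + K1 i)"
            using wd[OF w] True CK1[OF _ w] by simp
          also have "\<dots> = (- (\<Sum>i\<in>I - D. C1 i)) \<bullet> P w + (1 - (\<Sum>i\<in>I - D. K1 i))"
            by (simp add: sum.distrib inner_sum_left)
          finally show "w $ J = (- (\<Sum>i\<in>I - D. C1 i)) \<bullet> P w + (1 - (\<Sum>i\<in>I - D. K1 i))" .
        qed
        then show ?thesis by blast
      next
        case False
        have Jd: "J - {d} \<in> JH V E" using JH_del[OF JJ dJ I(1) dI False] .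
        have "card ((J - {d}) \<inter> D) < card (J \<inter> D)"
        proof -
          have "(J - {d}) \<inter> D = J \<inter> D - {d}" by auto
          then show ?thesis using dJ dD by (metis IntI card_Diff1_less finite)
        qed
        then obtain c0 k0 where ck0: "\<And>w. w \<in> SH V E \<Longrightarrow> w $ (J - {d}) = c0 \<bullet> P w + k0"
          using less by blast
        have "\<forall>w\<in>SH V E. w $ J = (c0 - (\<Sum>i\<in>I - D. C i)) \<bullet> P w + (k0 - (\<Sum>i\<in>I - D. K i))"
        proof
          fix w assume w: "w \<in> SH V E"
          define Q where "Q = (\<Prod>j\<in>J - {d}. w $ {j})"
          have "w $ J = (\<Prod>j\<in>J. w $ {j})" using SH_prod[OF w JJ] .
          also have "\<dots> = w $ {d} * Q" unfolding Q_def
            using dJ by (metis finite prod.remove)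
          also have "\<dots> = Q - (\<Sum>i\<in>I - D. w $ {i} * Q)" using wd[OF w]
            by (simp add: left_diff_distrib sum_distrib_right)
          also have "\<dots> = w $ (J - {d}) - (\<Sum>i\<in>I - D. w $ (insert i (J - {d})))"
          proof -
            have "Q = w $ (J - {d})" unfolding Q_def using SH_prod[OF w Jd] by simp
            moreover have "w $ {i} * Q = w $ (insert i (J - {d}))" if i: "i \<in> I - D" for i
            proof -
              have "i \<notin> J - {d}" using i JdI by auto
              then have "w $ (insert i (J - {d})) = w $ {i} * Q"
                unfolding Q_def using SH_prod[OF w JH_swap[OF JJ dJ I(1) dI, of i]] i by simp
              then show ?thesis by simp
            qed
            ultimately show ?thesis by simp
          qed
          also have "\<dots> = (c0 \<bullet> P w + k0) - (\<Sum>i\<in>I - D. C i \<bullet> P w + K i)"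
            using ck0[OF w] CK[OF _ w] by simp
          also have "\<dots> = (c0 - (\<Sum>i\<in>I - D. C i)) \<bullet> P w + (k0 - (\<Sum>i\<in>I - D. K i))"
            by (simp add: sum.distrib inner_sum_left inner_diff_left)
          finally show "w $ J = (c0 - (\<Sum>i\<in>I - D. C i)) \<bullet> P w + (k0 - (\<Sum>i\<in>I - D. K i))" .
        qed
        then show ?thesis by blast
      qed
    qed
  qed
qed

end



lemma sum01: assumes "finite A" "\<forall>j\<in>A. f j \<in> {0::real,1}" "sum f A \<le> 1"
  shows "sum f A \<in> {0,1}"
proof (cases "\<forall>j\<in>A. f j = 0")
  case True then show ?thesis by simp
next
  case False
  then obtain j where j: "j \<in> A" "f j = 1" using assms(2) by blast
  have "f j \<le> sum f A" using assms j by (intro member_le_sum) auto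
  then show ?thesis using j assms(3) by simp
qed

lemma prod01: assumes "\<forall>j\<in>A. f j \<in> {0::real,1}" shows "prod f A \<in> {0,1}"
proof (cases "finite A")
  case True
  then show ?thesis using assms
  proof (induction A rule: finite_induct)
    case (insert x F)
    then have "f x \<in> {0,1}" "prod f F \<in> {0,1}" by auto
    then show ?case using insert(1,2) by (auto simp: prod.insert)
  qed simp
qed simp

context hg begin

definition blk :: "'a \<Rightarrow> 'a set" where "blk i = (THE I. I \<in> V \<and> i \<in> I)"

lemma blk: "blk i \<in> V" "i \<in> blk i"
proof -
  obtain I where I: "I \<in> V" "i \<in> I" using blk_ex by blast
  have "blk i = I" unfolding blk_def
    by (rule the_equality) (use I blk_uniq in auto)
  then show "blk i \<in> V" "i \<in> blk i" using I by auto
qed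

lemma blk_eq: "I \<in> V \<Longrightarrow> i \<in> I \<Longrightarrow> blk i = I"
  using blk(1)[of i] blk(2)[of i] blk_uniq[of I "blk i" i] by simp

lemma proj_SH: assumes w: "w \<in> SH V E" shows "P w \<in> SHle V E D"
  unfolding SHle_def
proof (intro CollectI conjI ballI allI impI)
  fix J assume J: "J \<in> JHle V E D"
  then have "J \<in> JH V E" unfolding JHle_def by simp
  then have "w $ J \<in> {0,1}" using w unfolding SH_def by blast
  then show "P w $ J \<in> {0,1}" using J by (simp only: proj_comp if_True)
next
  fix J assume "J \<notin> JHle V E D" then show "P w $ J = 0" by (simp add: proj_comp)
next
  fix I assume I: "I \<in> V"
  have "(\<Sum>i\<in>I - D. P w $ {i}) = (\<Sum>i\<in>I - D. w $ {i})"
    by (rule sum.cong) (auto simp: proj_comp single_JHle)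
  also have "\<dots> = 1 - w $ {ibar I}" using SH_ibar[OF w I] by simp
  also have "\<dots> \<le> 1"
  proof -
    have "w $ {ibar I} \<in> {0,1}" using w single_JH unfolding SH_def by blast
    then show ?thesis by auto
  qed
  finally show "(\<Sum>i\<in>I - D. P w $ {i}) \<le> 1" .
next
  fix J assume J: "J \<in> JHle V E D" and c: "1 < card J"
  have JJ: "J \<in> JH V E" "J \<subseteq> - D" using J unfolding JHle_def by auto
  have "P w $ J = w $ J" using J by (simp add: proj_comp)
  also have "\<dots> = (\<Prod>i\<in>J. w $ {i})" using SH_prod[OF w JJ(1)] .
  also have "\<dots> = (\<Prod>i\<in>J. P w $ {i})"
    by (rule prod.cong) (use JJ in \<open>auto simp: proj_comp single_JHle\<close>)
  finally show "P w $ J = (\<Prod>i\<in>J. P w $ {i})" .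
qed

lemma SHle_lift: assumes v: "v \<in> SHle V E D" shows "\<exists>w\<in>SH V E. P w = v"
proof -
  define w0 where "w0 i = (if i \<in> D then 1 - (\<Sum>j\<in>blk i - D. v $ {j}) else v $ {i})" for i
  define w where "w = (\<chi> J. if J \<in> JH V E then (\<Prod>i\<in>J. w0 i) else 0)"
  have v01: "v $ {i} \<in> {0,1}" if "i \<notin> D" for i using v single_JHle[OF that] unfolding SHle_def by blast
  have w001: "w0 i \<in> {0,1}" for i
  proof (cases "i \<in> D")
    case True
    have "(\<Sum>j\<in>blk i - D. v $ {j}) \<le> 1" using v blk(1)[of i] unfolding SHle_def by blast
    moreover have "\<forall>j\<in>blk i - D. v $ {j} \<in> {0,1}" using v01 by blast
    ultimately have "(\<Sum>j\<in>blk i - D. v $ {j}) \<in> {0,1}"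
      by (intro sum01) simp_all
    then show ?thesis using True unfolding w0_def by (auto simp del: insert_iff)
  next
    case False then show ?thesis using v01 unfolding w0_def by auto
  qed
  have wsing: "w $ {i} = w0 i" for i unfolding w_def using single_JH by simp
  have "w \<in> SH V E"
    unfolding SH_def
  proof (intro CollectI conjI ballI allI impI)
    fix J assume "J \<in> JH V E" then show "w $ J \<in> {0,1}" 
    proof -
      have "(\<Prod>i\<in>J. w0 i) \<in> {0,1}" using prod01[of J w0] w001 by blast
      then show ?thesis using \<open>J \<in> JH V E\<close> unfolding w_def by (simp only: vec_lambda_beta if_True)
    qed
  next
    fix J assume "J \<notin> JH V E" then show "w $ J = 0" unfolding w_def by simp
  next
    fix I assume I: "I \<in> V"
    have II: "I = insert (ibar I) (I - D)" using ID[OF I] ib I by auto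
    have nin: "ibar I \<notin> I - D" using ib I Dd by auto
    have bi: "blk (ibar I) = I" using blk_eq I ib by blast
    have "(\<Sum>i\<in>I. w $ {i}) = w0 (ibar I) + (\<Sum>i\<in>I - D. w0 i)"
      by (subst II, subst sum.insert[OF _ nin]) (auto simp: wsing)
    also have "\<dots> = 1"
    proof -
      have "ibar I \<in> D" using Dd I by blast
      then have "w0 (ibar I) = 1 - (\<Sum>j\<in>I - D. v $ {j})" unfolding w0_def bi by simp
      moreover have "(\<Sum>i\<in>I - D. w0 i) = (\<Sum>i\<in>I - D. v $ {i})"
        by (rule sum.cong) (simp_all add: w0_def)
      ultimately show ?thesis by simp
    qed
    finally show "(\<Sum>i\<in>I. w $ {i}) = 1" .
  next
    fix J assume "J \<in> JH V E" "1 < card J"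
    then show "w $ J = (\<Prod>i\<in>J. w $ {i})" 
      unfolding wsing unfolding w_def by simp
  qed
  moreover have "P w = v"
  proof (subst vec_eq_iff, intro allI)
    fix J show "P w $ J = v $ J"
    proof (cases "J \<in> JHle V E D")
      case False then show ?thesis using v unfolding SHle_def by (simp add: proj_comp)
    next
      case True
      have JJ: "J \<in> JH V E" "J \<subseteq> - D" using True unfolding JHle_def by auto
      have "P w $ J = (\<Prod>i\<in>J. w0 i)" using True JJ(1) unfolding w_def by (simp add: proj_comp)
      also have "\<dots> = (\<Prod>i\<in>J. v $ {i})"
        by (rule prod.cong) (use JJ(2) in \<open>auto simp: w0_def\<close>)
      also have "\<dots> = v $ J"
      proof (cases "card J > 1")
        case True then show ?thesis using v \<open>J \<in> JHle V E D\<close> unfolding SHle_def by auto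
      next
        case False
        have "J \<noteq> {}" using JH_ne JJ by blast
        then have "card J > 0" by (simp add: card_gt_0_iff)
        then have "card J = 1" using False by linarith
        then obtain j where "J = {j}" using card_1_singletonE by blast
        then show ?thesis by simp
      qed
      finally show ?thesis .
    qed
  qed
  ultimately show ?thesis by blast
qed

lemma proj_SH_eq: "P ` SH V E = SHle V E D"
  using proj_SH SHle_lift by blast

end



theorem corollary3p5:
  fixes V :: "'a::finite set set" and E :: "'a set set set"
    and ibar :: "'a set \<Rightarrow> 'a" and D :: "'a set"
    and a :: "real ^ ('a set)" and \<delta> :: real
  assumes "hyp_ok V E" and "partition_of_UNIV V" and "downward_closed E"
    and "\<forall>I\<in>V. ibar I \<in> I" and "D = ibar ` V"
    and "\<forall>J. J \<notin> JH V E \<longrightarrow> a $ J = 0"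
    and "valid_ineq (MCH V E) a \<delta>"
    and "{J \<in> JH V E. a $ J \<noteq> 0} \<subseteq> JHle V E D"
  shows "facet_inducing (MCH V E) a \<delta> \<longleftrightarrow>
         facet_inducing (MCHle V E D) (proj (JHle V E D) a) \<delta>"
proof -
  interpret hg V E ibar D using assms(1-5) by unfold_locales
  have "\<forall>J. \<exists>c k. \<forall>w\<in>SH V E. w $ J = c \<bullet> P w + k" using key by blast
  then obtain C K where CK: "\<And>J w. w \<in> SH V E \<Longrightarrow> w $ J = C J \<bullet> P w + K J" by metis
  define G where "G x = (\<chi> J. C J \<bullet> x)" for x :: "real ^ ('a set)"
  define k where "k = (\<chi> J. K J)"
  have linG: "linear G"
    by (rule linearI) (simp_all add: G_def vec_eq_iff inner_add_right)
  have linGP: "linear (\<lambda>x. G (P x))" using linear_compose[OF linear_proj linG] by (simp add: o_def)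
  have aff: "affm (\<lambda>x. G (P x) + k)" by (rule affm_lin[OF linGP])
  have T1: "SH V E \<subseteq> {x. G (P x) + k = x}"
    using CK by (auto simp: vec_eq_iff G_def k_def)
  have T2: "convex {x. G (P x) + k = x}"
    unfolding convex_def
  proof (intro ballI allI impI)
    fix x y :: "real ^ ('a set)" and u v :: real
    assume x: "x \<in> {x. G (P x) + k = x}" and y: "y \<in> {x. G (P x) + k = x}" and uv: "0 \<le> u" "0 \<le> v" "u + v = 1"
    have uu: "u = 1 - v" using uv by simp
    have "G (P ((1-v) *\<^sub>R x + v *\<^sub>R y)) + k = (1-v) *\<^sub>R (G (P x) + k) + v *\<^sub>R (G (P y) + k)"
      using aff unfolding affm_def by blast
    then show "u *\<^sub>R x + v *\<^sub>R y \<in> {x. G (P x) + k = x}"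
      using x y unfolding uu by simp
  qed
  have inv: "\<forall>x\<in>MCH V E. G (P x) + k = x"
    using hull_minimal[of "SH V E" "{x. G (P x) + k = x}" convex, OF T1 T2] unfolding MCH_def by blast
  have img: "P ` MCH V E = MCHle V E D"
    unfolding MCH_def MCHle_def convex_hull_linear_image[OF linear_proj] proj_SH_eq ..
  have pa: "P a = a"
  proof (subst vec_eq_iff, intro allI)
    fix J show "P a $ J = a $ J"
      using assms(6,8) by (cases "J \<in> JH V E") (auto simp: proj_comp)
  qed
  have aP: "a \<bullet> P x = a \<bullet> x" for x
  proof -
    have *: "a $ J * P x $ J = a $ J * x $ J" for J
      using pa by (metis (no_types, lifting) mult_eq_0_iff proj_comp)
    show ?thesis unfolding inner_vec_def by (rule sum.cong[OF refl]) (simp add: *)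
  qed
  define F where "F = {x \<in> MCH V E. a \<bullet> x = \<delta>}"
  have FS: "F \<subseteq> MCH V E" unfolding F_def by blast
  have PF: "P ` F = {y \<in> MCHle V E D. P a \<bullet> y = \<delta>}"
  proof
    show "P ` F \<subseteq> {y \<in> MCHle V E D. P a \<bullet> y = \<delta>}" unfolding F_def pa using img aP by auto
    show "{y \<in> MCHle V E D. P a \<bullet> y = \<delta>} \<subseteq> P ` F"
    proof
      fix y assume y: "y \<in> {y \<in> MCHle V E D. P a \<bullet> y = \<delta>}"
      then obtain x where x: "x \<in> MCH V E" "y = P x" using img by blast
      then have "a \<bullet> x = \<delta>" using y aP pa by simp
      then show "y \<in> P ` F" using x unfolding F_def by blast
    qed
  qed
  have validle: "valid_ineq (MCHle V E D) (P a) \<delta>"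
    unfolding valid_ineq_def
  proof
    fix y assume "y \<in> MCHle V E D"
    then obtain x where x: "x \<in> MCH V E" "y = P x" using img by blast
    then show "P a \<bullet> y \<le> \<delta>" using assms(7) aP pa unfolding valid_ineq_def by simp
  qed
  have "F facet_of MCH V E \<longleftrightarrow> P ` F facet_of P ` MCH V E"
    by (rule facet_transfer[OF FS linear_proj linG inv])
  then show ?thesis
    unfolding facet_inducing_def using assms(7) validle PF img F_def by simp
qed


end
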